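(* For integers $k\ge1$ let $p_k=\int_{\mathbb R}\mathrm{sech}^k(x)\cos(x)\,dx$ and $q_k=\int_{\mathbb R}\mathrm{sech}^k(x)\log(\mathrm{sech}(x))\cos(x)\,dx$. Then \[ q_3=q_1-\tfrac12p_1,\qquad q_5=\tfrac56q_1-\tfrac{29}{72}p_1,\qquad q_7=\tfrac{13}{18}q_1-\tfrac{121}{360}p_1 . \] *)

theory Defs
  imports "HOL-Analysis.Analysis"
begin

definition sech :: "real \<Rightarrow> real" where
  "sech x = 1 / cosh x"

definition p_int :: "nat \<Rightarrow> real" where
  "p_int k = (LBINT x. sech x ^ k * cos x)"

definition q_int :: "nat \<Rightarrow> real" where
  "q_int k = (LBINT x. sech x ^ k * ln (sech x) * cos x)"

end

theory Submission
  imports Defs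
begin

lemma sech_pos: "0 < sech x" by (simp add: sech_def)
lemma sech_le1: "sech x \<le> 1" using cosh_real_ge_1[of x] by (simp add: sech_def)
lemma ln_sech: "ln (sech x) = - ln (cosh x)" by (simp add: sech_def ln_div)
lemma one_x2_pos: "0 < 1 + (x::real)^2" by (simp add: add_pos_nonneg)

lemma key_bound: fixes x :: real shows "(1 + ln (cosh x)) * (1 + x^2) \<le> 54 * cosh x"
proof -
  define y where "y = \<bar>x\<bar>"
  have y0: "0 \<le> y" by (simp add: y_def)
  have cy: "cosh x = cosh y" by (simp add: y_def)
  have ce: "2 * cosh x = exp y + exp (-y)" unfolding cy by (simp add: cosh_def)
  have e1: "exp (-y) \<le> exp y" using y0 by simp
  have e0: "0 < exp (-y)" by simp
  have lc: "ln (cosh x) \<le> y"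
  proof -
    have "cosh x \<le> exp y" using ce e1 by argo
    then have "ln (cosh x) \<le> ln (exp y)" by (intro ln_mono) auto
    then show ?thesis by simp
  qed
  have ln0: "0 \<le> ln (cosh x)" using cosh_real_ge_1[of x] by simp
  have x2: "x^2 = y^2" by (simp add: y_def)
  have "(1 + ln (cosh x)) * (1 + x^2) \<le> (1 + y) * (1 + y^2)"
    using lc ln0 x2 y0 by (intro mult_mono) auto
  also have "\<dots> = 1 + y + y^2 + y^3" by (simp add: algebra_simps power2_eq_square power3_eq_cube)
  also have "\<dots> \<le> 27 + 27*y + 9*y^2 + y^3" using y0 by (simp add: add_mono)
  also have "\<dots> = 27 * (1 + y / of_nat 3)^3" by (simp add: power3_eq_cube power2_eq_square field_simps)
  also have "\<dots> \<le> 27 * exp y"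
    using exp_ge_one_plus_x_over_n_power_n[where x=y and n=3] y0 by simp
  also have "\<dots> \<le> 54 * cosh x" using ce e0 by argo
  finally show ?thesis .
qed

lemma sech_bound: "sech x * (1 + ln (cosh x)) \<le> 54 / (1 + x^2)"
  using key_bound[of x] cosh_real_pos[of x] one_x2_pos[of x]
  by (simp add: sech_def field_simps)

lemma pow_bound:
  assumes "k \<ge> 1"
  shows "\<bar>sech x ^ k\<bar> \<le> 54 / (1 + x^2)" "\<bar>sech x ^ k * ln (sech x)\<bar> \<le> 54 / (1 + x^2)"
proof -
  have a: "\<bar>sech x ^ k\<bar> \<le> sech x"
    using sech_pos[of x] sech_le1[of x] assms
    by (simp add: power_le_one power_increasing[of 1 k "sech x"] abs_of_pos)
      (metis One_nat_def power_decreasing power_one_right sech_le1 sech_pos less_imp_le)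
  have ln0: "0 \<le> ln (cosh x)" using cosh_real_ge_1[of x] by simp
  have "sech x \<le> sech x * (1 + ln (cosh x))" using ln0 sech_pos[of x]
    by (simp add: distrib_left)
  then have "\<bar>sech x ^ k\<bar> \<le> sech x * (1 + ln (cosh x))" using a by linarith
  then show "\<bar>sech x ^ k\<bar> \<le> 54 / (1 + x^2)" using sech_bound[of x] by linarith
  have "\<bar>sech x ^ k * ln (sech x)\<bar> = \<bar>sech x ^ k\<bar> * ln (cosh x)"
    by (simp add: ln_sech abs_mult ln0)
  also have "\<dots> \<le> sech x * ln (cosh x)" using a ln0 by (simp add: mult_right_mono)
  also have "\<dots> \<le> sech x * (1 + ln (cosh x))" using sech_pos[of x] by simp
  finally show "\<bar>sech x ^ k * ln (sech x)\<bar> \<le> 54 / (1 + x^2)" using sech_bound[of x] by linarith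
qed

lemma int_bound: "integrable lborel (\<lambda>x::real. 1 / (1 + x^2))"
proof -
  have "set_integrable lborel (einterval (-\<infinity>) \<infinity>) (\<lambda>x::real. 1 / (1 + x^2))"
  proof (rule interval_integral_FTC_nonneg(1)[where F=arctan and A="-pi/2" and B="pi/2"])
    fix x :: real
    show "(arctan has_real_derivative 1 / (1 + x^2)) (at x)"
      by (auto intro!: derivative_eq_intros simp: power2_eq_square divide_inverse)
    have "1 + x^2 \<noteq> 0" using one_x2_pos[of x] by linarith
    then show "isCont (\<lambda>x::real. 1 / (1 + x^2)) x" by (intro continuous_intros) auto
  qed (auto simp: ereal_tendsto_simps1 tendsto_arctan_at_bot tendsto_arctan_at_top)
  then show ?thesis by (simp add: set_integrable_def)
qed

lemma cont_sech: "continuous_on UNIV sech"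
  unfolding sech_def by (intro continuous_intros) (metis cosh_real_pos less_irrefl)
lemma cont_lnsech: "continuous_on UNIV (\<lambda>x. ln (sech x))"
  unfolding ln_sech by (intro continuous_intros) (metis cosh_real_pos less_irrefl)

lemma integ:
  assumes "k \<ge> 1"
  shows "integrable lborel (\<lambda>x. sech x ^ k * cos x)"
        "integrable lborel (\<lambda>x. sech x ^ k * ln (sech x) * cos x)"
proof -
  have i54: "integrable lborel (\<lambda>x::real. 54 * (1 / (1 + x^2)))" by (intro integrable_mult_right int_bound)
  show "integrable lborel (\<lambda>x. sech x ^ k * cos x)"
  proof (rule Bochner_Integration.integrable_bound[OF i54])
    show "(\<lambda>x. sech x ^ k * cos x) \<in> borel_measurable lborel"
      by (auto intro!: borel_measurable_continuous_onI continuous_intros cont_sech cont_lnsech)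
    show "AE x in lborel. norm (sech x ^ k * cos x) \<le> norm (54 * (1 / (1 + x^2)))"
    proof (rule AE_I2)
      fix x :: real
      have "\<bar>sech x ^ k * cos x\<bar> \<le> \<bar>sech x ^ k\<bar>" by (simp add: abs_mult mult_left_le)
      then show "norm (sech x ^ k * cos x) \<le> norm (54 * (1 / (1 + x^2)))"
        using pow_bound(1)[OF assms, of x] by (simp add: abs_of_pos one_x2_pos)
    qed
  qed
  show "integrable lborel (\<lambda>x. sech x ^ k * ln (sech x) * cos x)"
  proof (rule Bochner_Integration.integrable_bound[OF i54])
    show "(\<lambda>x. sech x ^ k * ln (sech x) * cos x) \<in> borel_measurable lborel"
      by (auto intro!: borel_measurable_continuous_onI continuous_intros cont_sech cont_lnsech)
    show "AE x in lborel. norm (sech x ^ k * ln (sech x) * cos x) \<le> norm (54 * (1 / (1 + x^2)))"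
    proof (rule AE_I2)
      fix x :: real
      have "\<bar>sech x ^ k * ln (sech x) * cos x\<bar> \<le> \<bar>sech x ^ k * ln (sech x)\<bar>" by (simp add: abs_mult mult_left_le)
      then show "norm (sech x ^ k * ln (sech x) * cos x) \<le> norm (54 * (1 / (1 + x^2)))"
        using pow_bound(2)[OF assms, of x] by (simp add: abs_of_pos one_x2_pos)
    qed
  qed
qed

lemma ftc_R:
  fixes F g :: "real \<Rightarrow> real"
  assumes D: "\<And>x. (F has_real_derivative g x) (at x)"
    and C: "\<And>x. isCont g x"
    and I: "integrable lborel g"
    and T: "(F \<longlongrightarrow> 0) at_top" and B: "(F \<longlongrightarrow> 0) at_bot"
  shows "(LBINT x. g x) = 0"
proof -
  have "(LBINT x=-\<infinity>..\<infinity>. g x) = 0 - 0"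
    apply (rule interval_integral_FTC_integrable[where F=F])
    using D C I T B
    by (auto simp: has_real_derivative_iff_has_vector_derivative[symmetric] set_integrable_def ereal_tendsto_simps1)
  then show ?thesis
    by (simp add: interval_lebesgue_integral_def set_lebesgue_integral_def)
qed

lemma lim0:
  fixes c :: real
  shows "((\<lambda>x. c / (1 + x^2)) \<longlongrightarrow> 0) at_top" "((\<lambda>x. c / (1 + x^2)) \<longlongrightarrow> 0) at_bot"
proof -
  have a: "filterlim (\<lambda>x::real. 1 + x^2) at_top at_top"
    by (intro filterlim_tendsto_add_at_top[OF tendsto_const] filterlim_pow_at_top filterlim_ident) auto
  have b: "filterlim (\<lambda>x::real. 1 + x^2) at_top at_bot"
    by (intro filterlim_tendsto_add_at_top[OF tendsto_const] filterlim_pow_at_bot_even filterlim_ident) auto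
  show "((\<lambda>x. c / (1 + x^2)) \<longlongrightarrow> 0) at_top"
    using tendsto_mult[OF tendsto_const[of c] tendsto_inverse_0_at_top[OF a]] by (simp add: divide_inverse)
  show "((\<lambda>x. c / (1 + x^2)) \<longlongrightarrow> 0) at_bot"
    using tendsto_mult[OF tendsto_const[of c] tendsto_inverse_0_at_top[OF b]] by (simp add: divide_inverse)
qed

lemma lim0_bound:
  fixes f :: "real \<Rightarrow> real"
  assumes "\<And>x. \<bar>f x\<bar> \<le> c / (1 + x^2)"
  shows "(f \<longlongrightarrow> 0) at_top" "(f \<longlongrightarrow> 0) at_bot"
  using assms by (auto intro!: Lim_null_comparison[OF _ lim0(1)] Lim_null_comparison[OF _ lim0(2)] always_eventually)

lemma ibp:
  fixes f fa fb :: "real \<Rightarrow> real"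
  assumes d1: "\<And>x. (f has_real_derivative fa x) (at x)"
      and d2: "\<And>x. (fa has_real_derivative fb x) (at x)"
      and c2: "continuous_on UNIV fb"
      and i0: "integrable lborel (\<lambda>x. f x * cos x)"
      and i2: "integrable lborel (\<lambda>x. fb x * cos x)"
      and l1: "(f \<longlongrightarrow> 0) at_top" and l2: "(f \<longlongrightarrow> 0) at_bot"
      and l3: "(fa \<longlongrightarrow> 0) at_top" and l4: "(fa \<longlongrightarrow> 0) at_bot"
  shows "(LBINT x. fb x * cos x) = - (LBINT x. f x * cos x)"
proof -
  have "(LBINT x. fb x * cos x + f x * cos x) = 0"
  proof (rule ftc_R[where F="\<lambda>x. fa x * cos x + f x * sin x"])
    fix x :: real
    show "((\<lambda>x. fa x * cos x + f x * sin x) has_real_derivative fb x * cos x + f x * cos x) (at x)"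
      by (auto intro!: derivative_eq_intros d1 d2 simp: algebra_simps)
    have "isCont fb x" using c2 by (simp add: continuous_on_eq_continuous_at)
    moreover have "isCont f x" using d1 by (rule DERIV_isCont)
    ultimately show "isCont (\<lambda>x. fb x * cos x + f x * cos x) x" by (intro continuous_intros)
  next
    show "integrable lborel (\<lambda>x. fb x * cos x + f x * cos x)" using i0 i2 by simp
  next
    have b: "\<And>x. norm (fa x * cos x + f x * sin x) \<le> \<bar>fa x\<bar> + \<bar>f x\<bar>"
    proof -
      fix x
      have "\<bar>fa x * cos x\<bar> \<le> \<bar>fa x\<bar>" by (simp add: abs_mult mult_left_le)
      moreover have "\<bar>f x * sin x\<bar> \<le> \<bar>f x\<bar>" by (simp add: abs_mult mult_left_le)
      ultimately show "norm (fa x * cos x + f x * sin x) \<le> \<bar>fa x\<bar> + \<bar>f x\<bar>" by simp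
    qed
    show "((\<lambda>x. fa x * cos x + f x * sin x) \<longlongrightarrow> 0) at_top"
      by (rule Lim_null_comparison[OF always_eventually[OF allI[OF b]]])
         (use tendsto_add[OF tendsto_rabs_zero[OF l3] tendsto_rabs_zero[OF l1]] in simp)
    show "((\<lambda>x. fa x * cos x + f x * sin x) \<longlongrightarrow> 0) at_bot"
      by (rule Lim_null_comparison[OF always_eventually[OF allI[OF b]]])
         (use tendsto_add[OF tendsto_rabs_zero[OF l4] tendsto_rabs_zero[OF l2]] in simp)
  qed
  then show ?thesis using i0 i2 by simp
qed

lemma sech_deriv: "(sech has_real_derivative (- sech x * tanh x)) (at x)"
proof -
  have "cosh x \<noteq> 0" by (metis cosh_real_pos less_irrefl)
  then show ?thesis
    unfolding sech_def[abs_def] tanh_def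
    by (auto intro!: derivative_eq_intros simp: power2_eq_square field_simps)
qed

lemma tanh_sq: "tanh x ^ 2 = 1 - sech x ^ 2"
proof -
  have c: "cosh x \<noteq> 0" by (metis cosh_real_pos less_irrefl)
  have "tanh x ^2 + sech x ^2 = (sinh x^2 + 1) / cosh x^2"
    by (simp add: tanh_def sech_def power_divide add_divide_distrib)
  also have "\<dots> = 1" using cosh_square_eq[of x] c by (metis divide_self power_not_zero)
  finally show ?thesis by simp
qed

lemma tanh_deriv: "(tanh has_real_derivative (sech x ^ 2)) (at (x::real))"
proof -
  have "cosh x \<noteq> 0" by (metis cosh_real_pos less_irrefl)
  then show ?thesis using has_field_derivative_tanh[where g="\<lambda>x. x" and Db=1 and x=x and s=UNIV] by (simp add: tanh_sq)
qed

lemma cosh_ne0: "cosh (x::real) \<noteq> 0" by (metis cosh_real_pos less_irrefl)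

lemma sech_chain[derivative_intros]:
  "(g has_real_derivative g') (at x within s) \<Longrightarrow>
   ((\<lambda>x. sech (g x)) has_real_derivative (- sech (g x) * tanh (g x) * g')) (at x within s)"
  using DERIV_chain2[OF sech_deriv] by blast

lemma tanh_chain[derivative_intros]:
  "(g has_real_derivative g') (at x within s) \<Longrightarrow>
   ((\<lambda>x. tanh (g x)) has_real_derivative (sech (g x) ^ 2 * g')) (at x within s)"
  using DERIV_chain2[OF tanh_deriv] by blast

lemma sech_cont[continuous_intros]: "continuous_on s g \<Longrightarrow> continuous_on s (\<lambda>x. sech (g x))"
  unfolding sech_def by (auto intro!: continuous_intros simp: cosh_ne0)

lemma lnsech_cont[continuous_intros]: "continuous_on s g \<Longrightarrow> continuous_on s (\<lambda>x. ln (sech (g x)))"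
  unfolding ln_sech by (auto intro!: continuous_intros simp: cosh_ne0)

lemma sechpow_deriv:
  "((\<lambda>x. sech x ^ Suc m) has_real_derivative (- (real (Suc m) * (sech x ^ Suc m * tanh x)))) (at x)"
proof -
  have "((\<lambda>x. sech x ^ Suc m) has_real_derivative (1 + real m) * ((- sech x * tanh x) * sech x ^ m)) (at x)"
    by (rule DERIV_power_Suc[OF sech_deriv])
  moreover have "(1 + real m) * ((- sech x * tanh x) * sech x ^ m) = - (real (Suc m) * (sech x ^ Suc m * tanh x))"
    by (simp add: algebra_simps)
  ultimately show ?thesis by (rule DERIV_cong)
qed

lemma p_rec:
  assumes "k \<ge> 1"
  shows "real k^2 * p_int k - real k * (real k + 1) * p_int (k+2) = - p_int k"
proof -
  obtain m where km: "k = Suc m" using assms by (cases k) auto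
  define f where "f = (\<lambda>x. sech x ^ k)"
  define f1 where "f1 = (\<lambda>x. - (real k * (sech x ^ k * tanh x)))"
  define f2 where "f2 = (\<lambda>x. real k^2 * sech x ^ k - real k * (real k + 1) * sech x ^ (k+2))"
  have e2: "(\<lambda>x. f2 x * cos x) = (\<lambda>x. real k^2 * (sech x ^ k * cos x) - real k * (real k + 1) * (sech x ^ (k+2) * cos x))"
    by (simp add: f2_def fun_eq_iff algebra_simps)
  have ik: "integrable lborel (\<lambda>x. sech x ^ k * cos x)" using integ(1) assms by blast
  have ik2: "integrable lborel (\<lambda>x. sech x ^ (k+2) * cos x)" by (rule integ(1)) simp
  have "(LBINT x. f2 x * cos x) = - (LBINT x. f x * cos x)"
  proof (rule ibp[where fa=f1])
    fix x :: real
    show "(f has_real_derivative f1 x) (at x)"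
      unfolding f_def f1_def km by (rule sechpow_deriv)
    have "(f1 has_real_derivative - (real k * ((- (real k * (sech x ^ k * tanh x))) * tanh x + sech x ^ 2 * sech x ^ k))) (at x)"
      unfolding f1_def km by (intro DERIV_minus DERIV_cmult DERIV_mult sechpow_deriv tanh_deriv)
    moreover have "- (real k * ((- (real k * (sech x ^ k * tanh x))) * tanh x + sech x ^ 2 * sech x ^ k)) = f2 x"
    proof -
      have t2: "tanh x * tanh x = 1 - sech x * sech x" using tanh_sq[of x] by (simp add: power2_eq_square)
      have "- (real k * ((- (real k * (sech x ^ k * tanh x))) * tanh x + sech x ^ 2 * sech x ^ k))
          = real k^2 * sech x^k * (tanh x * tanh x) - real k * sech x^k * sech x^2"
        by (simp add: algebra_simps power2_eq_square)
      also have "\<dots> = f2 x" unfolding t2 f2_def by (simp add: algebra_simps power2_eq_square power_add)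
      finally show ?thesis .
    qed
    ultimately show "(f1 has_real_derivative f2 x) (at x)" by (rule DERIV_cong)
  next
    show "continuous_on UNIV f2" unfolding f2_def by (intro continuous_intros)
  next
    show "integrable lborel (\<lambda>x. f x * cos x)" unfolding f_def by (rule ik)
    show "integrable lborel (\<lambda>x. f2 x * cos x)" unfolding e2 using ik ik2 by simp
  next
    have b0: "\<And>x. \<bar>f x\<bar> \<le> 54 / (1 + x^2)" unfolding f_def using pow_bound(1)[OF assms] by blast
    have b1: "\<And>x. \<bar>f1 x\<bar> \<le> (real k * 54) / (1 + x^2)"
    proof -
      fix x :: real
      have t: "\<bar>tanh x\<bar> \<le> 1" using tanh_real_bounds[of x] by auto
      have "\<bar>f1 x\<bar> = real k * (\<bar>sech x ^ k\<bar> * \<bar>tanh x\<bar>)" by (simp add: f1_def abs_mult)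
      also have "\<dots> \<le> real k * \<bar>sech x ^ k\<bar>" using t by (simp add: mult_left_le mult_left_mono)
      also have "\<dots> \<le> real k * (54 / (1 + x^2))" using mult_left_mono[OF pow_bound(1)[OF assms, of x], of "real k"] by simp
      finally show "\<bar>f1 x\<bar> \<le> (real k * 54) / (1 + x^2)" by simp
    qed
    show "(f \<longlongrightarrow> 0) at_top" "(f \<longlongrightarrow> 0) at_bot" using lim0_bound[OF b0] by auto
    show "(f1 \<longlongrightarrow> 0) at_top" "(f1 \<longlongrightarrow> 0) at_bot" using lim0_bound[OF b1] by auto
  qed
  moreover have "(LBINT x. f2 x * cos x) = real k^2 * p_int k - real k * (real k + 1) * p_int (k+2)"
    unfolding e2 p_int_def using ik ik2 by simp
  ultimately show ?thesis by (simp add: f_def p_int_def)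
qed

lemma lnsech_deriv: "((\<lambda>x. ln (sech x)) has_real_derivative - tanh x) (at x)"
proof -
  have "((\<lambda>x. - ln (cosh x)) has_real_derivative - (sinh x / cosh x)) (at x)"
    using cosh_real_pos[of x] by (auto intro!: derivative_eq_intros simp: divide_inverse)
  then show ?thesis by (simp add: ln_sech tanh_def)
qed

lemma alg_q:
  fixes K S s t L :: real
  assumes "t * t = 1 - s * s"
  shows "- ((- (K * (S * t)) * t + s\<^sup>2 * S) * (K * L + 1) + (K * - t + 0) * (S * t)) =
     K\<^sup>2 * (S * L) - K * (K + 1) * (S * s\<^sup>2 * L) + 2 * K * S - (2 * K + 1) * (S * s\<^sup>2)"
  using assms by algebra

lemma q_rec:
  assumes "k \<ge> 1"
  shows "real k^2 * q_int k - real k * (real k + 1) * q_int (k+2) + 2 * real k * p_int k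
          - (2 * real k + 1) * p_int (k+2) = - q_int k"
proof -
  obtain m where km: "k = Suc m" using assms by (cases k) auto
  define f where "f = (\<lambda>x. sech x ^ k * ln (sech x))"
  define f1 where "f1 = (\<lambda>x. - (sech x ^ k * tanh x * (real k * ln (sech x) + 1)))"
  define f2 where "f2 = (\<lambda>x. real k^2 * (sech x ^ k * ln (sech x)) - real k * (real k + 1) * (sech x ^ (k+2) * ln (sech x))
     + 2 * real k * sech x ^ k - (2 * real k + 1) * sech x ^ (k+2))"
  have e2: "(\<lambda>x. f2 x * cos x) = (\<lambda>x. real k^2 * (sech x ^ k * ln (sech x) * cos x) - real k * (real k + 1) * (sech x ^ (k+2) * ln (sech x) * cos x)
     + 2 * real k * (sech x ^ k * cos x) - (2 * real k + 1) * (sech x ^ (k+2) * cos x))"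
    by (simp add: f2_def fun_eq_iff algebra_simps)
  have ik: "integrable lborel (\<lambda>x. sech x ^ k * cos x)" using integ(1) assms by blast
  have ik2: "integrable lborel (\<lambda>x. sech x ^ (k+2) * cos x)" by (rule integ(1)) simp
  have jk: "integrable lborel (\<lambda>x. sech x ^ k * ln (sech x) * cos x)" using integ(2) assms by blast
  have jk2: "integrable lborel (\<lambda>x. sech x ^ (k+2) * ln (sech x) * cos x)" by (rule integ(2)) simp
  have "(LBINT x. f2 x * cos x) = - (LBINT x. f x * cos x)"
  proof (rule ibp[where fa=f1])
    fix x :: real
    have t2: "tanh x * tanh x = 1 - sech x * sech x" using tanh_sq[of x] by (simp add: power2_eq_square)
    show "(f has_real_derivative f1 x) (at x)"
      unfolding f_def f1_def km
      apply (rule DERIV_cong[OF DERIV_mult[OF sechpow_deriv lnsech_deriv]])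
      by (simp add: algebra_simps)
    show "(f1 has_real_derivative f2 x) (at x)"
      unfolding f1_def km
      apply (rule DERIV_cong[OF DERIV_minus[OF DERIV_mult[OF DERIV_mult[OF sechpow_deriv tanh_deriv]
               DERIV_add[OF DERIV_cmult[OF lnsech_deriv] DERIV_const]]]])
      unfolding f2_def km power_add
      by (rule alg_q[OF t2])
  next
    show "continuous_on UNIV f2" unfolding f2_def by (intro continuous_intros)
  next
    show "integrable lborel (\<lambda>x. f x * cos x)" unfolding f_def by (rule jk)
    show "integrable lborel (\<lambda>x. f2 x * cos x)" unfolding e2 using ik ik2 jk jk2 by simp
  next
    have b0: "\<And>x. \<bar>f x\<bar> \<le> 54 / (1 + x^2)" unfolding f_def using pow_bound(2)[OF assms] by blast
    have b1: "\<And>x. \<bar>f1 x\<bar> \<le> (real k * 54 + 54) / (1 + x^2)"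
    proof -
      fix x :: real
      have t: "\<bar>tanh x\<bar> \<le> 1" using tanh_real_bounds[of x] by auto
      have "f1 x = - (tanh x * (real k * (sech x ^ k * ln (sech x)) + sech x ^ k))"
        by (simp add: f1_def algebra_simps)
      then have "\<bar>f1 x\<bar> = \<bar>tanh x\<bar> * \<bar>real k * (sech x ^ k * ln (sech x)) + sech x ^ k\<bar>"
        by (simp only: abs_minus_cancel abs_mult)
      also have "\<dots> \<le> \<bar>real k * (sech x ^ k * ln (sech x)) + sech x ^ k\<bar>"
        using t by (simp add: mult_left_le_one_le)
      also have "\<dots> \<le> real k * \<bar>sech x ^ k * ln (sech x)\<bar> + \<bar>sech x ^ k\<bar>"
        by (metis abs_mult abs_of_nat abs_triangle_ineq)
      also have "\<dots> \<le> real k * (54 / (1 + x^2)) + 54 / (1 + x^2)"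
        using mult_left_mono[OF pow_bound(2)[OF assms, of x], of "real k"] pow_bound(1)[OF assms, of x]
        by simp
      finally show "\<bar>f1 x\<bar> \<le> (real k * 54 + 54) / (1 + x^2)" by (simp add: add_divide_distrib)
    qed
    show "(f \<longlongrightarrow> 0) at_top" "(f \<longlongrightarrow> 0) at_bot" using lim0_bound[OF b0] by auto
    show "(f1 \<longlongrightarrow> 0) at_top" "(f1 \<longlongrightarrow> 0) at_bot" using lim0_bound[OF b1] by auto
  qed
  moreover have "(LBINT x. f2 x * cos x) = real k^2 * q_int k - real k * (real k + 1) * q_int (k+2) + 2 * real k * p_int k
          - (2 * real k + 1) * p_int (k+2)"
    unfolding e2 p_int_def q_int_def using ik ik2 jk jk2 by simp
  ultimately show ?thesis by (simp add: f_def q_int_def)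
qed

theorem lemma3p2:
  shows "q_int 3 = q_int 1 - 1/2 * p_int 1 \<and>
         q_int 5 = 5/6 * q_int 1 - 29/72 * p_int 1 \<and>
         q_int 7 = 13/18 * q_int 1 - 121/360 * p_int 1"
proof -
  have p1: "p_int 1 - 2 * p_int 3 = - p_int 1" using p_rec[of 1] by (simp add: numeral_eq_Suc)
  have p3: "9 * p_int 3 - 12 * p_int 5 = - p_int 3" using p_rec[of 3] by (simp add: numeral_eq_Suc)
  have p5: "25 * p_int 5 - 30 * p_int 7 = - p_int 5" using p_rec[of 5] by (simp add: numeral_eq_Suc)
  have q1: "q_int 1 - 2 * q_int 3 + 2 * p_int 1 - 3 * p_int 3 = - q_int 1" using q_rec[of 1] by (simp add: numeral_eq_Suc)
  have q3: "9 * q_int 3 - 12 * q_int 5 + 6 * p_int 3 - 7 * p_int 5 = - q_int 3" using q_rec[of 3] by (simp add: numeral_eq_Suc)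
  have q5: "25 * q_int 5 - 30 * q_int 7 + 10 * p_int 5 - 11 * p_int 7 = - q_int 5" using q_rec[of 5] by (simp add: numeral_eq_Suc)
  show ?thesis using p1 p3 p5 q1 q3 q5 by argo
qed

end
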